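(* Let $(X,m)$, $X=\{x_1,\ldots,x_n\}\subset\mathbb{R}^N$, be a central configuration with nonzero masses, exponent $a\neq0$, nonzero total mass $\mu_0$, and codimension $c$, and let $\lambda\in\mathbb{R}$ be such that $\sum_{i\neq j}m_iS_{ij}\overrightarrow{x_jx_i}=\overrightarrow{O}$ for all $j$, where $S_{ij}=s_{ij}^a-\lambda/\mu_0$ for $i\neq j$. Define $S_{jj}=-\frac{1}{m_j}\sum_{i\neq j}m_iS_{ij}$ and the vectors $C_j=(m_1S_{1j},\ldots,m_nS_{nj})\in\mathbb{R}^n$. Then for any $k,l\ge0$ with $k+l=c+1$, every $(c+1)\times(c+1)$ minor of any $n\times(c+1)$ matrix whose columns are $k$ of the vectors $C_j$ and $l$ vectors of $\mathbb{W}_0(X)$ vanishes. In particular, every $(c+1)\times(c+1)$ minor of the $n\times n$ matrix $(S_{ij})$ is zero.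
   Context: $s_{ij}=\overrightarrow{x_ix_j}^2$. A central configuration has accelerations $\overrightarrow{\gamma}_j=-\sum_{i\neq j}m_is_{ij}^a\overrightarrow{x_ix_j}$ such that, for some vector $\overrightarrow{\gamma}_O$, point $x_O$ and real $\lambda$, $\overrightarrow{\gamma}_j-\overrightarrow{\gamma}_O=\lambda\overrightarrow{x_Ox_j}$ for all $j$; for $\mu_0\neq0$ these equations take the form given in the claim. The codimension of $X$ is $(n-1)-d$ with $d$ the dimension of the affine hull of $X$. $\mathbb{W}_0(X)$ is the space of weight vectors $(w_i)$ with $\sum_iw_i\overrightarrow{px_i}=\overrightarrow{O}$ for all points $p$. *)

theory Defs
  imports "HOL-Analysis.Analysis"
begin

text \<open>Configurations: points x 0, ..., x (n-1) in a Euclidean space, masses m 0, ..., m (n-1).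
  Indices are shifted by one with respect to the paper (x_1..x_n).\<close>

definition sqd :: "(nat \<Rightarrow> 'a::euclidean_space) \<Rightarrow> nat \<Rightarrow> nat \<Rightarrow> real" where
  "sqd x i j = (norm (x j - x i))^2"

definition accel :: "nat \<Rightarrow> (nat \<Rightarrow> 'a::euclidean_space) \<Rightarrow> (nat \<Rightarrow> real) \<Rightarrow> real \<Rightarrow> nat \<Rightarrow> 'a" where
  "accel n x m a j = - (\<Sum>i\<in>{..<n} - {j}. (m i * sqd x i j powr a) *\<^sub>R (x j - x i))"

definition central_config :: "nat \<Rightarrow> (nat \<Rightarrow> 'a::euclidean_space) \<Rightarrow> (nat \<Rightarrow> real) \<Rightarrow> real \<Rightarrow> bool" where
  "central_config n x m a \<longleftrightarrow>
     (\<exists>\<gamma>O xO lam. \<forall>j<n. accel n x m a j - \<gamma>O = lam *\<^sub>R (x j - xO))"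

definition total_mass :: "nat \<Rightarrow> (nat \<Rightarrow> real) \<Rightarrow> real" where
  "total_mass n m = (\<Sum>i<n. m i)"

definition Soff :: "nat \<Rightarrow> (nat \<Rightarrow> 'a::euclidean_space) \<Rightarrow> (nat \<Rightarrow> real) \<Rightarrow> real \<Rightarrow> real \<Rightarrow> nat \<Rightarrow> nat \<Rightarrow> real" where
  "Soff n x m a lam i j = sqd x i j powr a - lam / total_mass n m"

definition Smat :: "nat \<Rightarrow> (nat \<Rightarrow> 'a::euclidean_space) \<Rightarrow> (nat \<Rightarrow> real) \<Rightarrow> real \<Rightarrow> real \<Rightarrow> nat \<Rightarrow> nat \<Rightarrow> real" where
  "Smat n x m a lam i j =
     (if i \<noteq> j then Soff n x m a lam i j
      else - (1 / m j) * (\<Sum>i'\<in>{..<n} - {j}. m i' * Soff n x m a lam i' j))"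

definition Cvec :: "nat \<Rightarrow> (nat \<Rightarrow> 'a::euclidean_space) \<Rightarrow> (nat \<Rightarrow> real) \<Rightarrow> real \<Rightarrow> real \<Rightarrow> nat \<Rightarrow> nat \<Rightarrow> real" where
  "Cvec n x m a lam j i = m i * Smat n x m a lam i j"

definition W0 :: "nat \<Rightarrow> (nat \<Rightarrow> 'a::euclidean_space) \<Rightarrow> (nat \<Rightarrow> real) set" where
  "W0 n x = {w. (\<forall>i\<ge>n. w i = 0) \<and> (\<forall>p. (\<Sum>i<n. w i *\<^sub>R (x i - p)) = 0)}"

definition det_nat :: "nat \<Rightarrow> (nat \<Rightarrow> nat \<Rightarrow> real) \<Rightarrow> real" where
  "det_nat k A = (\<Sum>p | p permutes {..<k}. of_int (sign p) * (\<Prod>s<k. A s (p s)))"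

end

theory Submission imports Defs "Jordan_Normal_Form.Determinant" begin

lemma det_nat_eq: "det_nat k A = det (mat k k (\<lambda>(s,t). A s t))"
  unfolding det_nat_def
  by (subst det_def'[of _ k]) (auto intro!: sum.cong prod.cong simp: atLeast0LessThan)

lemma det_nat_zero_row:
  assumes "r < k" "\<forall>t<k. A r t = 0"
  shows "det_nat k A = 0"
  unfolding det_nat_def
proof (rule sum.neutral, safe)
  fix p assume p: "p permutes {..<k}"
  have "p r < k" using p assms(1) by (meson lessThan_iff permutes_in_image)
  then have "(\<Prod>s<k. A s (p s)) = 0"
    using assms by (intro prod_zero) auto
  then show "of_int (sign p) * (\<Prod>s<k. A s (p s)) = 0" by simp
qed

lemma det_nat_kernel:
  assumes "det_nat k A = 0"
  shows "\<exists>\<alpha>. (\<exists>t<k. \<alpha> t \<noteq> 0) \<and> (\<forall>s<k. (\<Sum>t<k. A s t * \<alpha> t) = 0)"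
proof -
  let ?M = "mat k k (\<lambda>(s,t). A s t)"
  have M: "?M \<in> carrier_mat k k" by simp
  from assms[unfolded det_nat_eq] det_0_iff_vec_prod_zero[OF M]
  obtain v where v: "v \<in> carrier_vec k" "v \<noteq> 0\<^sub>v k" "?M *\<^sub>v v = 0\<^sub>v k" by auto
  have "\<exists>t<k. v $ t \<noteq> 0"
    using v(1,2) by (metis carrier_vecD eq_vecI index_zero_vec(1) index_zero_vec(2))
  moreover have "\<forall>s<k. (\<Sum>t<k. A s t * v $ t) = 0"
  proof (intro allI impI)
    fix s assume s: "s < k"
    have "(?M *\<^sub>v v) $ s = 0" using v(3) s by simp
    then show "(\<Sum>t<k. A s t * v $ t) = 0"
      using s v(1) by (simp add: mult_mat_vec_def scalar_prod_def atLeast0LessThan)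
  qed
  ultimately show ?thesis by blast
qed

lemma det_nat_kernel_rev:
  assumes "\<exists>t<k. \<alpha> t \<noteq> 0" "\<forall>s<k. (\<Sum>t<k. A s t * \<alpha> t) = 0"
  shows "det_nat k A = 0"
proof -
  let ?M = "mat k k (\<lambda>(s,t). A s t)"
  have M: "?M \<in> carrier_mat k k" by simp
  let ?v = "vec k \<alpha>"
  have "?v \<noteq> 0\<^sub>v k" using assms(1) by (metis index_vec index_zero_vec(1))
  moreover have "?M *\<^sub>v ?v = 0\<^sub>v k"
    using assms(2) by (intro eq_vecI) (auto simp: mult_mat_vec_def scalar_prod_def atLeast0LessThan)
  ultimately show ?thesis unfolding det_nat_eq using det_0_iff_vec_prod_zero[OF M] vec_carrier by blast
qed

lemma W0_props:
  fixes x :: "nat \<Rightarrow> 'a::euclidean_space"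
  assumes "w \<in> W0 n x"
  shows "(\<Sum>i<n. w i) = 0" "(\<Sum>i<n. w i *\<^sub>R x i) = 0"
proof -
  have h: "\<And>p. (\<Sum>i<n. w i *\<^sub>R (x i - p)) = 0" using assms by (auto simp: W0_def)
  have e: "\<And>p. (\<Sum>i<n. w i *\<^sub>R (x i - p)) = (\<Sum>i<n. w i *\<^sub>R x i) - (\<Sum>i<n. w i) *\<^sub>R p"
    by (simp add: scaleR_diff_right sum_subtractf scaleR_sum_left)
  show 2: "(\<Sum>i<n. w i *\<^sub>R x i) = 0" using h[of 0] by simp
  obtain b :: 'a where b: "b \<in> Basis" using nonempty_Basis by blast
  then have "b \<noteq> 0" by auto
  moreover have "(\<Sum>i<n. w i) *\<^sub>R b = 0" using h[of b] e[of b] 2 by simp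
  ultimately show "(\<Sum>i<n. w i) = 0" by simp
qed

lemma W0_intro:
  fixes x :: "nat \<Rightarrow> 'a::euclidean_space"
  assumes "\<forall>i\<ge>n. w i = 0" "(\<Sum>i<n. w i) = 0" "(\<Sum>i<n. w i *\<^sub>R x i) = 0"
  shows "w \<in> W0 n x"
proof -
  have e: "\<And>p. (\<Sum>i<n. w i *\<^sub>R (x i - p)) = (\<Sum>i<n. w i *\<^sub>R x i) - (\<Sum>i<n. w i) *\<^sub>R p"
    by (simp add: scaleR_diff_right sum_subtractf scaleR_sum_left)
  show ?thesis using assms e unfolding W0_def by auto
qed

lemma W0_comb:
  fixes x :: "nat \<Rightarrow> 'a::euclidean_space"
  assumes "\<forall>t<K. v t \<in> W0 n x"
  shows "(\<lambda>i. \<Sum>t<K. \<alpha> t * v t i) \<in> W0 n x"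
proof (rule W0_intro)
  show "\<forall>i\<ge>n. (\<Sum>t<K. \<alpha> t * v t i) = 0" using assms by (auto simp: W0_def)
  have "(\<Sum>i<n. \<Sum>t<K. \<alpha> t * v t i) = (\<Sum>t<K. \<alpha> t * (\<Sum>i<n. v t i))"
    by (subst sum.swap) (simp add: sum_distrib_left)
  also have "\<dots> = 0" using assms W0_props(1)[of _ n x] by (intro sum.neutral) auto
  finally show "(\<Sum>i<n. \<Sum>t<K. \<alpha> t * v t i) = 0" .
  have "(\<Sum>i<n. (\<Sum>t<K. \<alpha> t * v t i) *\<^sub>R x i) = (\<Sum>t<K. \<alpha> t *\<^sub>R (\<Sum>i<n. v t i *\<^sub>R x i))"
  proof -
    have "(\<Sum>i<n. (\<Sum>t<K. \<alpha> t * v t i) *\<^sub>R x i) = (\<Sum>i<n. \<Sum>t<K. \<alpha> t *\<^sub>R (v t i *\<^sub>R x i))"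
      by (simp add: scaleR_sum_left)
    also have "\<dots> = (\<Sum>t<K. \<Sum>i<n. \<alpha> t *\<^sub>R (v t i *\<^sub>R x i))" by (rule sum.swap)
    also have "\<dots> = (\<Sum>t<K. \<alpha> t *\<^sub>R (\<Sum>i<n. v t i *\<^sub>R x i))" by (simp add: scaleR_sum_right)
    finally show ?thesis .
  qed
  also have "\<dots> = 0" using assms W0_props(2)[of _ n x] by (intro sum.neutral) auto
  finally show "(\<Sum>i<n. (\<Sum>t<K. \<alpha> t * v t i) *\<^sub>R x i) = 0" .
qed

lemma W0_zero_on_indep:
  fixes x :: "nat \<Rightarrow> 'a::euclidean_space"
  assumes w: "w \<in> W0 n x" and inj: "inj_on x {..<n}" and I: "I \<subseteq> {..<n}"
    and ind: "\<not> affine_dependent (x ` I)"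
    and J: "\<forall>i\<in>{..<n} - I. w i = 0"
  shows "\<forall>i\<in>I. w i = 0"
proof -
  have injI: "inj_on x I" using inj I inj_on_subset by blast
  have fin: "finite I" using I finite_subset by blast
  have s1: "(\<Sum>i<n. w i) = (\<Sum>i\<in>I. w i)"
    using J I by (intro sum.mono_neutral_right) auto
  have s2: "(\<Sum>i<n. w i *\<^sub>R x i) = (\<Sum>i\<in>I. w i *\<^sub>R x i)"
    using J I by (intro sum.mono_neutral_right) auto
  define U where "U y = w (inv_into I x y)" for y
  have U: "\<And>i. i \<in> I \<Longrightarrow> U (x i) = w i" unfolding U_def using injI by simp
  have "sum U (x ` I) = (\<Sum>i\<in>I. w i)" using injI U by (simp add: sum.reindex)
  then have a: "sum U (x ` I) = 0" using s1 W0_props(1)[OF w] by simp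
  have "(\<Sum>y\<in>x ` I. U y *\<^sub>R y) = (\<Sum>i\<in>I. w i *\<^sub>R x i)" using injI U by (simp add: sum.reindex)
  then have b: "(\<Sum>y\<in>x ` I. U y *\<^sub>R y) = 0" using s2 W0_props(2)[OF w] by simp
  have "\<forall>y\<in>x ` I. U y = 0"
    using ind a b affine_dependent_explicit_finite[of "x ` I"] fin by blast
  then show ?thesis using U by auto
qed

lemma key:
  fixes x :: "nat \<Rightarrow> 'a::euclidean_space"
  assumes inj: "inj_on x {..<n}"
    and codim: "int c = int n - 1 - aff_dim (x ` {..<n})"
    and v: "\<forall>t<c+1. v t \<in> W0 n x"
  shows "\<exists>\<alpha>. (\<exists>t<c+1. \<alpha> t \<noteq> 0) \<and> (\<forall>i<n. (\<Sum>t<c+1. \<alpha> t * v t i) = 0)"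
proof -
  obtain B where B: "B \<subseteq> x ` {..<n}" "\<not> affine_dependent B"
    "affine hull (x ` {..<n}) = affine hull B"
    using affine_basis_exists by blast
  define I where "I = {i\<in>{..<n}. x i \<in> B}"
  have I: "I \<subseteq> {..<n}" unfolding I_def by auto
  have xI: "x ` I = B" using B(1) unfolding I_def by auto
  have injI: "inj_on x I" using inj I inj_on_subset by blast
  have cardB: "card I = card B" using xI injI card_image by fastforce
  have "aff_dim (x ` {..<n}) = aff_dim B" using B(3) by (metis aff_dim_affine_hull)
  then have "int (card B) = aff_dim (x ` {..<n}) + 1" using aff_dim_affine_independent[OF B(2)] by simp
  define J where "J = {..<n} - I"
  have cJ: "card J = c"
  proof -
    have "card J = n - card I" unfolding J_def using I by (simp add: card_Diff_subset finite_subset)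
    moreover have "card I \<le> n" using I by (metis card_lessThan card_mono finite_lessThan)
    ultimately show ?thesis using codim \<open>int (card B) = _\<close> cardB by linarith
  qed
  obtain h where h: "bij_betw h {0..<c} J"
    using ex_bij_betw_nat_finite[of J] cJ unfolding J_def by auto
  define A where "A s t = (if s < c then v t (h s) else 0)" for s t
  have "det_nat (c+1) A = 0" by (rule det_nat_zero_row[of c]) (auto simp: A_def)
  from det_nat_kernel[OF this] obtain \<alpha> where al: "\<exists>t<c+1. \<alpha> t \<noteq> 0"
    "\<forall>s<c+1. (\<Sum>t<c+1. A s t * \<alpha> t) = 0" by blast
  define w where "w i = (\<Sum>t<c+1. \<alpha> t * v t i)" for i
  have wW: "w \<in> W0 n x" unfolding w_def by (rule W0_comb[OF v])
  have wJ: "\<forall>i\<in>{..<n} - I. w i = 0"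
  proof
    fix i assume "i \<in> {..<n} - I"
    then have "i \<in> J" by (simp add: J_def)
    then obtain s where s: "s < c" "h s = i" using h by (auto simp: bij_betw_def)
    have "(\<Sum>t<c+1. A s t * \<alpha> t) = 0" using al(2) s by simp
    then show "w i = 0" using s unfolding A_def w_def by (simp add: mult.commute)
  qed
  have "\<forall>i\<in>I. w i = 0"
    by (rule W0_zero_on_indep[OF wW inj I]) (use B(2) xI wJ in auto)
  then have "\<forall>i<n. w i = 0" using wJ by auto
  then show ?thesis using al(1) unfolding w_def by blast
qed

lemma Cvec_W0:
  fixes x :: "nat \<Rightarrow> 'a::euclidean_space"
  assumes masses: "\<forall>i<n. m i \<noteq> 0"
    and lam: "\<forall>j<n. (\<Sum>i\<in>{..<n} - {j}. (m i * Soff n x m a lam i j) *\<^sub>R (x i - x j)) = 0"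
    and j: "j < n"
  shows "(\<lambda>i. if i < n then Cvec n x m a lam j i else 0) \<in> W0 n x"
proof (rule W0_intro)
  let ?C = "\<lambda>i. if i < n then Cvec n x m a lam j i else 0"
  show "\<forall>i\<ge>n. ?C i = 0" by auto
  have off: "\<And>i. i \<noteq> j \<Longrightarrow> Cvec n x m a lam j i = m i * Soff n x m a lam i j"
    by (simp add: Cvec_def Smat_def)
  have dj: "Cvec n x m a lam j j = - (\<Sum>i\<in>{..<n} - {j}. m i * Soff n x m a lam i j)"
    using masses j by (simp add: Cvec_def Smat_def)
  have jn: "j \<in> {..<n}" using j by simp
  have s0: "(\<Sum>i<n. ?C i) = 0"
  proof -
    have "(\<Sum>i<n. ?C i) = (\<Sum>i<n. Cvec n x m a lam j i)" by simp
    also have "\<dots> = Cvec n x m a lam j j + (\<Sum>i\<in>{..<n} - {j}. Cvec n x m a lam j i)"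
      using jn by (simp add: sum.remove)
    also have "(\<Sum>i\<in>{..<n} - {j}. Cvec n x m a lam j i) = (\<Sum>i\<in>{..<n} - {j}. m i * Soff n x m a lam i j)"
      using off by (intro sum.cong) auto
    finally show ?thesis using dj by simp
  qed
  then show "(\<Sum>i<n. ?C i) = 0" .
  have "(\<Sum>i<n. ?C i *\<^sub>R (x i - x j)) = (\<Sum>i\<in>{..<n} - {j}. ?C i *\<^sub>R (x i - x j))"
    using jn by (simp add: sum.remove)
  also have "\<dots> = (\<Sum>i\<in>{..<n} - {j}. (m i * Soff n x m a lam i j) *\<^sub>R (x i - x j))"
    using off by (intro sum.cong) auto
  also have "\<dots> = 0" using lam j by simp
  finally have z: "(\<Sum>i<n. ?C i *\<^sub>R (x i - x j)) = 0" .
  have "(\<Sum>i<n. ?C i *\<^sub>R (x i - x j)) = (\<Sum>i<n. ?C i *\<^sub>R x i) - (\<Sum>i<n. ?C i) *\<^sub>R x j"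
    by (simp add: scaleR_diff_right sum_subtractf scaleR_sum_left)
  then show "(\<Sum>i<n. ?C i *\<^sub>R x i) = 0" using z s0 by simp
qed

theorem mainTheorem16:
  fixes x :: "nat \<Rightarrow> 'a::euclidean_space" and m :: "nat \<Rightarrow> real"
    and n c :: nat and a lam :: real
  assumes distinct: "inj_on x {..<n}"
    and masses: "\<forall>i<n. m i \<noteq> 0"
    and a_nz: "a \<noteq> 0"
    and mu0: "total_mass n m \<noteq> 0"
    and cc: "central_config n x m a"
    and codim: "int c = int n - 1 - aff_dim (x ` {..<n})"
    and lam: "\<forall>j<n. (\<Sum>i\<in>{..<n} - {j}. (m i * Soff n x m a lam i j) *\<^sub>R (x i - x j)) = 0"
  shows "(\<forall>k l (js :: nat \<Rightarrow> nat) (ws :: nat \<Rightarrow> nat \<Rightarrow> real) (rs :: nat \<Rightarrow> nat).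
            k + l = c + 1 \<longrightarrow> (\<forall>t<k. js t < n) \<longrightarrow> (\<forall>t<l. ws t \<in> W0 n x) \<longrightarrow>
            strict_mono_on {..<c+1} rs \<longrightarrow> (\<forall>s<c+1. rs s < n) \<longrightarrow>
            det_nat (c+1) (\<lambda>s t. if t < k then Cvec n x m a lam (js t) (rs s)
                                 else ws (t - k) (rs s)) = 0)
       \<and> (\<forall>(rs :: nat \<Rightarrow> nat) (cs :: nat \<Rightarrow> nat).
            strict_mono_on {..<c+1} rs \<longrightarrow> (\<forall>s<c+1. rs s < n) \<longrightarrow>
            strict_mono_on {..<c+1} cs \<longrightarrow> (\<forall>t<c+1. cs t < n) \<longrightarrow>
            det_nat (c+1) (\<lambda>s t. Smat n x m a lam (rs s) (cs t)) = 0)"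
proof (intro conjI allI impI)
  fix k l and js :: "nat \<Rightarrow> nat" and ws :: "nat \<Rightarrow> nat \<Rightarrow> real" and rs :: "nat \<Rightarrow> nat"
  assume kl: "k + l = c + 1" and js: "\<forall>t<k. js t < n" and ws: "\<forall>t<l. ws t \<in> W0 n x"
    and rs: "\<forall>s<c+1. rs s < n"
  define v where "v t i = (if i < n then (if t < k then Cvec n x m a lam (js t) i else ws (t - k) i) else 0)" for t i
  have "\<forall>t<c+1. v t \<in> W0 n x"
  proof (intro allI impI)
    fix t assume t: "t < c + 1"
    show "v t \<in> W0 n x"
    proof (cases "t < k")
      case True
      then have "v t = (\<lambda>i. if i < n then Cvec n x m a lam (js t) i else 0)"
        unfolding v_def by auto
      then show ?thesis using Cvec_W0[OF masses lam] js True by simp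
    next
      case False
      then have tl: "t - k < l" using t kl by linarith
      then have w: "ws (t - k) \<in> W0 n x" using ws by blast
      then have "v t = ws (t - k)" unfolding v_def using False by (auto simp: W0_def)
      then show ?thesis using w by simp
    qed
  qed
  from key[OF distinct codim this] obtain \<alpha> where al: "\<exists>t<c+1. \<alpha> t \<noteq> 0"
    "\<forall>i<n. (\<Sum>t<c+1. \<alpha> t * v t i) = 0" by blast
  show "det_nat (c+1) (\<lambda>s t. if t < k then Cvec n x m a lam (js t) (rs s)
                                 else ws (t - k) (rs s)) = 0"
  proof (rule det_nat_kernel_rev[OF al(1)], intro allI impI)
    fix s assume s: "s < c + 1"
    have "(\<Sum>t<c+1. (if t < k then Cvec n x m a lam (js t) (rs s) else ws (t - k) (rs s)) * \<alpha> t)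
       = (\<Sum>t<c+1. \<alpha> t * v t (rs s))"
      using rs s by (intro sum.cong) (auto simp: v_def)
    also have "\<dots> = 0" using al(2) rs s by simp
    finally show "(\<Sum>t<c+1. (if t < k then Cvec n x m a lam (js t) (rs s) else ws (t - k) (rs s)) * \<alpha> t) = 0" .
  qed
next
  fix rs cs :: "nat \<Rightarrow> nat"
  assume rs: "\<forall>s<c+1. rs s < n" and cs: "\<forall>t<c+1. cs t < n"
  define v where "v t i = (if i < n then Cvec n x m a lam (cs t) i else 0)" for t i
  have "\<forall>t<c+1. v t \<in> W0 n x"
    using Cvec_W0[OF masses lam] cs unfolding v_def by auto
  from key[OF distinct codim this] obtain \<alpha> where al: "\<exists>t<c+1. \<alpha> t \<noteq> 0"
    "\<forall>i<n. (\<Sum>t<c+1. \<alpha> t * v t i) = 0" by blast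
  show "det_nat (c+1) (\<lambda>s t. Smat n x m a lam (rs s) (cs t)) = 0"
  proof (rule det_nat_kernel_rev[OF al(1)], intro allI impI)
    fix s assume s: "s < c + 1"
    have mr: "m (rs s) \<noteq> 0" using masses rs s by blast
    have "(\<Sum>t<c+1. Smat n x m a lam (rs s) (cs t) * \<alpha> t)
       = (1 / m (rs s)) * (\<Sum>t<c+1. \<alpha> t * v t (rs s))"
      unfolding sum_distrib_left
      using rs s mr by (intro sum.cong) (auto simp: v_def Cvec_def)
    also have "\<dots> = 0" using al(2) rs s by simp
    finally show "(\<Sum>t<c+1. Smat n x m a lam (rs s) (cs t) * \<alpha> t) = 0" .
  qed
qed
end
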